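(* For any i--lattice $L$, ${\rm Con}_{\mathbb{I}}(L)=\{\theta\in{\rm Con}(L): \theta=\theta'\}=\{\theta\vee\theta' : \theta\in{\rm Con}(L)\}=\{\theta\cap\theta' : \theta\in{\rm Con}(L)\}=\{\theta\in{\rm Con}(L): (\forall x\in L)\ ((x/\theta)'=x'/\theta)\}=\{\theta\in{\rm Con}(L): (\forall\gamma\in L/\theta)\ (\gamma'\in L/\theta)\}$.
   Context: An i--lattice is a lattice $L$ with a unary operation $'$ such that $a''=a$ and $a\leq b\Rightarrow b'\leq a'$. ${\rm Con}(L)$ is the lattice of lattice congruences of $L$ (joins $\vee$ taken in ${\rm Con}(L)$); ${\rm Con}_{\mathbb{I}}(L)$ is the set of $\theta\in{\rm Con}(L)$ with $(a,b)\in\theta\Rightarrow(a',b')\in\theta$. For $\theta\subseteq L^2$, $\theta'=\{(a',b'):(a,b)\in\theta\}$; for $M\subseteq L$, $M'=\{x':x\in M\}$; $x/\theta$ is the class of $x$ and $L/\theta$ the set of classes. *)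

theory Defs
  imports Main
begin

definition i_lattice :: "('a::lattice \<Rightarrow> 'a) \<Rightarrow> bool" where
  "i_lattice c \<longleftrightarrow> (\<forall>a. c (c a) = a) \<and> (\<forall>a b. a \<le> b \<longrightarrow> c b \<le> c a)"

definition lat_Con :: "('a::lattice) rel set" where
  "lat_Con = {\<theta>. equiv UNIV \<theta> \<and>
     (\<forall>a b c d. (a, b) \<in> \<theta> \<longrightarrow> (c, d) \<in> \<theta> \<longrightarrow>
        (inf a c, inf b d) \<in> \<theta> \<and> (sup a c, sup b d) \<in> \<theta>)}"

definition lat_ConI :: "('a::lattice \<Rightarrow> 'a) \<Rightarrow> 'a rel set" where
  "lat_ConI c = {\<theta> \<in> lat_Con. \<forall>a b. (a, b) \<in> \<theta> \<longrightarrow> (c a, c b) \<in> \<theta>}"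

definition rel_inv :: "('a \<Rightarrow> 'a) \<Rightarrow> 'a rel \<Rightarrow> 'a rel" where
  "rel_inv c \<theta> = (\<lambda>(a, b). (c a, c b)) ` \<theta>"

definition con_join :: "('a::lattice) rel \<Rightarrow> 'a rel \<Rightarrow> 'a rel" where
  "con_join \<theta> \<phi> = \<Inter> {\<psi> \<in> lat_Con. \<theta> \<union> \<phi> \<subseteq> \<psi>}"

end

theory Submission
  imports Defs
begin

lemma il_inv: "i_lattice c \<Longrightarrow> c (c a) = a"
  by (simp add: i_lattice_def)

lemma il_anti: "i_lattice c \<Longrightarrow> a \<le> b \<Longrightarrow> c b \<le> c a"
  by (simp add: i_lattice_def)

lemma il_inf: assumes "i_lattice c" shows "c (inf a b) = sup (c a) (c b)"
proof (rule antisym)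
  have "c (sup (c a) (c b)) \<le> c (c a)" by (rule il_anti[OF assms]) simp
  moreover have "c (sup (c a) (c b)) \<le> c (c b)" by (rule il_anti[OF assms]) simp
  ultimately have "c (sup (c a) (c b)) \<le> inf a b" using il_inv[OF assms] by simp
  then have "c (inf a b) \<le> c (c (sup (c a) (c b)))" by (rule il_anti[OF assms])
  then show "c (inf a b) \<le> sup (c a) (c b)" using il_inv[OF assms] by simp
next
  show "sup (c a) (c b) \<le> c (inf a b)"
    using il_anti[OF assms, of "inf a b" a] il_anti[OF assms, of "inf a b" b] by simp
qed

lemma il_sup: assumes "i_lattice c" shows "c (sup a b) = inf (c a) (c b)"
proof -
  have "c (inf (c a) (c b)) = sup a b" using il_inf[OF assms] il_inv[OF assms] by simp
  then have "c (c (inf (c a) (c b))) = c (sup a b)" by simp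
  then show ?thesis using il_inv[OF assms] by simp
qed

lemma mem_rel_inv: assumes "i_lattice c"
  shows "(x, y) \<in> rel_inv c \<theta> \<longleftrightarrow> (c x, c y) \<in> \<theta>"
proof
  assume "(x, y) \<in> rel_inv c \<theta>"
  then obtain a b where "(a,b) \<in> \<theta>" "x = c a" "y = c b" unfolding rel_inv_def by auto
  then show "(c x, c y) \<in> \<theta>" using il_inv[OF assms] by simp
next
  assume "(c x, c y) \<in> \<theta>"
  then have "(c (c x), c (c y)) \<in> rel_inv c \<theta>" unfolding rel_inv_def by force
  then show "(x, y) \<in> rel_inv c \<theta>" using il_inv[OF assms] by simp
qed

lemma Con_equivI:
  assumes "\<And>x. (x,x) \<in> \<theta>" "\<And>x y. (x,y) \<in> \<theta> \<Longrightarrow> (y,x) \<in> \<theta>"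
    "\<And>x y z. (x,y) \<in> \<theta> \<Longrightarrow> (y,z) \<in> \<theta> \<Longrightarrow> (x,z) \<in> \<theta>"
  shows "equiv UNIV \<theta>"
proof (rule equivI)
  show "\<theta> \<subseteq> UNIV \<times> UNIV" by simp
  show "refl_on UNIV \<theta>" by (rule refl_onI) (rule assms(1))
  show "sym \<theta>" by (rule symI) (rule assms(2))
  show "trans \<theta>" by (rule transI) (rule assms(3))
qed

lemma Con_equiv: "\<theta> \<in> lat_Con \<Longrightarrow> equiv UNIV \<theta>"
  unfolding lat_Con_def by simp
lemma Con_refl: "\<theta> \<in> lat_Con \<Longrightarrow> (x,x) \<in> \<theta>"
  by (erule Con_equiv[THEN equivE]) (simp add: refl_on_def)
lemma Con_sym: "\<theta> \<in> lat_Con \<Longrightarrow> (x,y) \<in> \<theta> \<Longrightarrow> (y,x) \<in> \<theta>"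
  by (erule Con_equiv[THEN equivE]) (erule symD)
lemma Con_trans: "\<theta> \<in> lat_Con \<Longrightarrow> (x,y) \<in> \<theta> \<Longrightarrow> (y,z) \<in> \<theta> \<Longrightarrow> (x,z) \<in> \<theta>"
  by (erule Con_equiv[THEN equivE]) (erule transD)
lemma Con_inf: "\<theta> \<in> lat_Con \<Longrightarrow> (a,b) \<in> \<theta> \<Longrightarrow> (x,y) \<in> \<theta> \<Longrightarrow> (inf a x, inf b y) \<in> \<theta>"
  unfolding lat_Con_def by simp
lemma Con_sup: "\<theta> \<in> lat_Con \<Longrightarrow> (a,b) \<in> \<theta> \<Longrightarrow> (x,y) \<in> \<theta> \<Longrightarrow> (sup a x, sup b y) \<in> \<theta>"
  unfolding lat_Con_def by simp

lemma ConI: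
  assumes "\<And>x. (x,x) \<in> \<theta>" "\<And>x y. (x,y) \<in> \<theta> \<Longrightarrow> (y,x) \<in> \<theta>"
    "\<And>x y z. (x,y) \<in> \<theta> \<Longrightarrow> (y,z) \<in> \<theta> \<Longrightarrow> (x,z) \<in> \<theta>"
    "\<And>a b x y. (a,b) \<in> \<theta> \<Longrightarrow> (x,y) \<in> \<theta> \<Longrightarrow> (inf a x, inf b y) \<in> \<theta>"
    "\<And>a b x y. (a,b) \<in> \<theta> \<Longrightarrow> (x,y) \<in> \<theta> \<Longrightarrow> (sup a x, sup b y) \<in> \<theta>"
  shows "\<theta> \<in> lat_Con"
  unfolding lat_Con_def using Con_equivI[OF assms(1-3)] assms(4,5) by simp

lemma rel_inv_Con: assumes il: "i_lattice c" and t: "\<theta> \<in> lat_Con"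
  shows "rel_inv c \<theta> \<in> lat_Con"
proof (rule ConI)
  fix x show "(x,x) \<in> rel_inv c \<theta>" unfolding mem_rel_inv[OF il] by (rule Con_refl[OF t])
next
  fix x y assume "(x,y) \<in> rel_inv c \<theta>" then show "(y,x) \<in> rel_inv c \<theta>"
    unfolding mem_rel_inv[OF il] by (rule Con_sym[OF t])
next
  fix x y z assume "(x,y) \<in> rel_inv c \<theta>" "(y,z) \<in> rel_inv c \<theta>" then show "(x,z) \<in> rel_inv c \<theta>"
    unfolding mem_rel_inv[OF il] by (rule Con_trans[OF t])
next
  fix a b x y assume "(a,b) \<in> rel_inv c \<theta>" "(x,y) \<in> rel_inv c \<theta>"
  then have "(c a, c b) \<in> \<theta>" "(c x, c y) \<in> \<theta>" unfolding mem_rel_inv[OF il] .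
  then have "(sup (c a) (c x), sup (c b) (c y)) \<in> \<theta>" by (rule Con_sup[OF t])
  then show "(inf a x, inf b y) \<in> rel_inv c \<theta>" using mem_rel_inv[OF il] il_inf[OF il] by simp
next
  fix a b x y assume "(a,b) \<in> rel_inv c \<theta>" "(x,y) \<in> rel_inv c \<theta>"
  then have "(c a, c b) \<in> \<theta>" "(c x, c y) \<in> \<theta>" unfolding mem_rel_inv[OF il] .
  then have "(inf (c a) (c x), inf (c b) (c y)) \<in> \<theta>" by (rule Con_inf[OF t])
  then show "(sup a x, sup b y) \<in> rel_inv c \<theta>" using mem_rel_inv[OF il] il_sup[OF il] by simp
qed

lemma Inter_Con: assumes S: "S \<subseteq> lat_Con" shows "\<Inter> S \<in> lat_Con"
proof (rule ConI)
  fix x show "(x,x) \<in> \<Inter> S" using S Con_refl by blast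
next
  fix x y assume "(x,y) \<in> \<Inter> S" then show "(y,x) \<in> \<Inter> S"
    using S Con_sym by blast
next
  fix x y z assume "(x,y) \<in> \<Inter> S" "(y,z) \<in> \<Inter> S" then show "(x,z) \<in> \<Inter> S"
    using S Con_trans by blast
next
  fix a b x y assume "(a,b) \<in> \<Inter> S" "(x,y) \<in> \<Inter> S"
  then show "(inf a x, inf b y) \<in> \<Inter> S" using S Con_inf by blast
next
  fix a b x y assume "(a,b) \<in> \<Inter> S" "(x,y) \<in> \<Inter> S"
  then show "(sup a x, sup b y) \<in> \<Inter> S" using S Con_sup by blast
qed

lemma Int_Con: "\<theta> \<in> lat_Con \<Longrightarrow> \<phi> \<in> lat_Con \<Longrightarrow> \<theta> \<inter> \<phi> \<in> lat_Con"
  using Inter_Con[of "{\<theta>, \<phi>}"] by simp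

lemma join_Con: "con_join \<theta> \<phi> \<in> lat_Con"
  unfolding con_join_def by (rule Inter_Con) blast

lemma ConI_iff: "\<theta> \<in> lat_ConI c \<longleftrightarrow> \<theta> \<in> lat_Con \<and> (\<forall>a b. (a, b) \<in> \<theta> \<longrightarrow> (c a, c b) \<in> \<theta>)"
  unfolding lat_ConI_def by simp

theorem lemma4p4:
  fixes c :: "'a::lattice \<Rightarrow> 'a"
  assumes "i_lattice c"
  shows "(lat_ConI c = {\<theta> \<in> lat_Con. \<theta> = rel_inv c \<theta>}) \<and>
    (lat_ConI c = {con_join \<theta> (rel_inv c \<theta>) | \<theta>. \<theta> \<in> lat_Con}) \<and>
    (lat_ConI c = {\<theta> \<inter> rel_inv c \<theta> | \<theta>. \<theta> \<in> lat_Con}) \<and>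
    (lat_ConI c = {\<theta> \<in> lat_Con. \<forall>x. c ` (\<theta> `` {x}) = \<theta> `` {c x}}) \<and>
    (lat_ConI c = {\<theta> \<in> lat_Con. \<forall>\<gamma> \<in> UNIV // \<theta>. c ` \<gamma> \<in> UNIV // \<theta>})"
proof -
  note il = assms
  note inv = il_inv[OF il]
  note mri = mem_rel_inv[OF il]
  have selfinv: "\<theta> = rel_inv c \<theta>" if "\<theta> \<in> lat_ConI c" for \<theta>
  proof -
    have cl: "\<And>a b. (a,b) \<in> \<theta> \<Longrightarrow> (c a, c b) \<in> \<theta>" using that unfolding ConI_iff by blast
    show ?thesis
    proof (intro set_eqI iffI)
      fix p assume p: "p \<in> \<theta>"
      obtain a b where ab: "p = (a,b)" by (cases p)
      have "(c a, c b) \<in> \<theta>" using p ab cl by simp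
      then show "p \<in> rel_inv c \<theta>" unfolding ab mri .
    next
      fix p assume p: "p \<in> rel_inv c \<theta>"
      obtain a b where ab: "p = (a,b)" by (cases p)
      have "(c a, c b) \<in> \<theta>" using p unfolding ab mri .
      then have "(c (c a), c (c b)) \<in> \<theta>" by (rule cl)
      then show "p \<in> \<theta>" unfolding ab inv .
    qed
  qed
  have A: "lat_ConI c = {\<theta> \<in> lat_Con. \<theta> = rel_inv c \<theta>}"
  proof (intro set_eqI iffI)
    fix \<theta> assume "\<theta> \<in> lat_ConI c" then show "\<theta> \<in> {\<theta> \<in> lat_Con. \<theta> = rel_inv c \<theta>}"
      using selfinv unfolding ConI_iff by blast
  next
    fix \<theta> assume h: "\<theta> \<in> {\<theta> \<in> lat_Con. \<theta> = rel_inv c \<theta>}"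
    then have t: "\<theta> \<in> lat_Con" and eq: "\<theta> = rel_inv c \<theta>" by auto
    have "(c a, c b) \<in> \<theta>" if "(a,b) \<in> \<theta>" for a b
    proof -
      have "(c a, c b) \<in> rel_inv c \<theta>" unfolding mri inv by (rule that)
      then show ?thesis using eq by simp
    qed
    then show "\<theta> \<in> lat_ConI c" using t unfolding ConI_iff by blast
  qed
  have B: "lat_ConI c = {con_join \<theta> (rel_inv c \<theta>) | \<theta>. \<theta> \<in> lat_Con}"
  proof (intro set_eqI iffI)
    fix \<theta> assume h: "\<theta> \<in> lat_ConI c"
    then have t: "\<theta> \<in> lat_Con" unfolding ConI_iff by blast
    have "con_join \<theta> (rel_inv c \<theta>) = \<theta>"
    proof -
      have u: "\<theta> \<union> rel_inv c \<theta> = \<theta>" using selfinv[OF h] by simp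
      show ?thesis unfolding con_join_def u using t by blast
    qed
    then show "\<theta> \<in> {con_join \<theta> (rel_inv c \<theta>) | \<theta>. \<theta> \<in> lat_Con}" using t by force
  next
    fix \<psi> assume "\<psi> \<in> {con_join \<theta> (rel_inv c \<theta>) | \<theta>. \<theta> \<in> lat_Con}"
    then obtain \<theta> where t: "\<theta> \<in> lat_Con" and psi: "\<psi> = con_join \<theta> (rel_inv c \<theta>)" by blast
    have "(c a, c b) \<in> \<psi>" if ab: "(a,b) \<in> \<psi>" for a b
      unfolding psi con_join_def
    proof (rule InterI)
      fix \<chi> assume "\<chi> \<in> {\<psi> \<in> lat_Con. \<theta> \<union> rel_inv c \<theta> \<subseteq> \<psi>}"
      then have chi: "\<chi> \<in> lat_Con" "\<theta> \<subseteq> \<chi>" "rel_inv c \<theta> \<subseteq> \<chi>" by auto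
      have "rel_inv c \<chi> \<in> {\<psi> \<in> lat_Con. \<theta> \<union> rel_inv c \<theta> \<subseteq> \<psi>}"
      proof -
        have "\<theta> \<subseteq> rel_inv c \<chi>"
        proof
          fix p assume p: "p \<in> \<theta>"
          obtain x y where xy: "p = (x,y)" by (cases p)
          have "(c (c x), c (c y)) \<in> \<theta>" using p xy inv by simp
          then have "(c x, c y) \<in> rel_inv c \<theta>" unfolding mri .
          then have "(c x, c y) \<in> \<chi>" using chi(3) by blast
          then show "p \<in> rel_inv c \<chi>" unfolding xy mri .
        qed
        moreover have "rel_inv c \<theta> \<subseteq> rel_inv c \<chi>"
          using chi(2) unfolding rel_inv_def by blast
        ultimately show ?thesis using rel_inv_Con[OF il chi(1)] by blast
      qed
      then have "(a,b) \<in> rel_inv c \<chi>" using ab unfolding psi con_join_def by blast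
      then show "(c a, c b) \<in> \<chi>" unfolding mri .
    qed
    then show "\<psi> \<in> lat_ConI c" using join_Con psi unfolding ConI_iff by blast
  qed
  have C: "lat_ConI c = {\<theta> \<inter> rel_inv c \<theta> | \<theta>. \<theta> \<in> lat_Con}"
  proof (intro set_eqI iffI)
    fix \<theta> assume h: "\<theta> \<in> lat_ConI c"
    then have t: "\<theta> \<in> lat_Con" unfolding ConI_iff by blast
    have "\<theta> \<inter> rel_inv c \<theta> = \<theta>" using selfinv[OF h] by simp
    then show "\<theta> \<in> {\<theta> \<inter> rel_inv c \<theta> | \<theta>. \<theta> \<in> lat_Con}" using t by force
  next
    fix \<psi> assume "\<psi> \<in> {\<theta> \<inter> rel_inv c \<theta> | \<theta>. \<theta> \<in> lat_Con}"
    then obtain \<theta> where t: "\<theta> \<in> lat_Con" and psi: "\<psi> = \<theta> \<inter> rel_inv c \<theta>" by blast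
    have "(c a, c b) \<in> \<psi>" if ab: "(a,b) \<in> \<psi>" for a b
    proof -
      have 1: "(a,b) \<in> \<theta>" "(c a, c b) \<in> \<theta>" using ab unfolding psi Int_iff mri by auto
      have "(c a, c b) \<in> rel_inv c \<theta>" unfolding mri inv by (rule 1(1))
      then show ?thesis unfolding psi using 1(2) by simp
    qed
    then show "\<psi> \<in> lat_ConI c" using Int_Con[OF t rel_inv_Con[OF il t]] psi unfolding ConI_iff by blast
  qed
  have D: "lat_ConI c = {\<theta> \<in> lat_Con. \<forall>x. c ` (\<theta> `` {x}) = \<theta> `` {c x}}"
  proof (intro set_eqI iffI)
    fix \<theta> assume h: "\<theta> \<in> lat_ConI c"
    then have t: "\<theta> \<in> lat_Con" and cl: "\<And>a b. (a,b) \<in> \<theta> \<Longrightarrow> (c a, c b) \<in> \<theta>"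
      unfolding ConI_iff by blast+
    have "c ` (\<theta> `` {x}) = \<theta> `` {c x}" for x
    proof (intro set_eqI iffI)
      fix z assume "z \<in> c ` (\<theta> `` {x})"
      then obtain y where "(x,y) \<in> \<theta>" "z = c y" by blast
      then show "z \<in> \<theta> `` {c x}" using cl by blast
    next
      fix z assume "z \<in> \<theta> `` {c x}"
      then have "(c x, z) \<in> \<theta>" by simp
      then have "(c (c x), c z) \<in> \<theta>" by (rule cl)
      then have "c z \<in> \<theta> `` {x}" using inv by simp
      then have "c (c z) \<in> c ` (\<theta> `` {x})" by (rule imageI)
      then show "z \<in> c ` (\<theta> `` {x})" using inv by simp
    qed
    then show "\<theta> \<in> {\<theta> \<in> lat_Con. \<forall>x. c ` (\<theta> `` {x}) = \<theta> `` {c x}}" using t by blast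
  next
    fix \<theta> assume h: "\<theta> \<in> {\<theta> \<in> lat_Con. \<forall>x. c ` (\<theta> `` {x}) = \<theta> `` {c x}}"
    then have t: "\<theta> \<in> lat_Con" and eq: "\<And>x. c ` (\<theta> `` {x}) = \<theta> `` {c x}" by auto
    have "(c a, c b) \<in> \<theta>" if "(a,b) \<in> \<theta>" for a b
    proof -
      have "b \<in> \<theta> `` {a}" using that by simp
      then have "c b \<in> c ` (\<theta> `` {a})" by (rule imageI)
      then show ?thesis unfolding eq by simp
    qed
    then show "\<theta> \<in> lat_ConI c" using t unfolding ConI_iff by blast
  qed
  have E: "lat_ConI c = {\<theta> \<in> lat_Con. \<forall>\<gamma> \<in> UNIV // \<theta>. c ` \<gamma> \<in> UNIV // \<theta>}"
  proof (intro set_eqI iffI)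
    fix \<theta> assume h: "\<theta> \<in> lat_ConI c"
    then have t: "\<theta> \<in> lat_Con" unfolding ConI_iff by blast
    from h D have eq: "\<And>x. c ` (\<theta> `` {x}) = \<theta> `` {c x}" by blast
    have "c ` \<gamma> \<in> UNIV // \<theta>" if g: "\<gamma> \<in> UNIV // \<theta>" for \<gamma>
    proof -
      obtain x where "\<gamma> = \<theta> `` {x}" using g unfolding quotient_def by blast
      then have "c ` \<gamma> = \<theta> `` {c x}" using eq by simp
      then show ?thesis by (auto simp: quotient_def)
    qed
    then show "\<theta> \<in> {\<theta> \<in> lat_Con. \<forall>\<gamma> \<in> UNIV // \<theta>. c ` \<gamma> \<in> UNIV // \<theta>}" using t by blast
  next
    fix \<theta> assume h: "\<theta> \<in> {\<theta> \<in> lat_Con. \<forall>\<gamma> \<in> UNIV // \<theta>. c ` \<gamma> \<in> UNIV // \<theta>}"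
    then have t: "\<theta> \<in> lat_Con" and q: "\<And>\<gamma>. \<gamma> \<in> UNIV // \<theta> \<Longrightarrow> c ` \<gamma> \<in> UNIV // \<theta>" by auto
    have "(c a, c b) \<in> \<theta>" if ab: "(a,b) \<in> \<theta>" for a b
    proof -
      have "\<theta> `` {a} \<in> UNIV // \<theta>" by (auto simp: quotient_def)
      then have "c ` (\<theta> `` {a}) \<in> UNIV // \<theta>" by (rule q)
      then obtain z where z: "c ` (\<theta> `` {a}) = \<theta> `` {z}" by (auto simp: quotient_def)
      have "a \<in> \<theta> `` {a}" using Con_refl[OF t] by simp
      then have "c a \<in> \<theta> `` {z}" unfolding z[symmetric] by (rule imageI)
      then have 1: "(z, c a) \<in> \<theta>" by simp
      have "b \<in> \<theta> `` {a}" using ab by simp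
      then have "c b \<in> \<theta> `` {z}" unfolding z[symmetric] by (rule imageI)
      then have 2: "(z, c b) \<in> \<theta>" by simp
      show ?thesis using Con_trans[OF t Con_sym[OF t 1] 2] .
    qed
    then show "\<theta> \<in> lat_ConI c" using t unfolding ConI_iff by blast
  qed
  show ?thesis using A B C D E by blast
qed

end
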